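(* For every $8$-uniform hypergraph $H=(V,E)$ with $m=|E|$, \[100\,\tau(H) \le 10.2854\,n_1 + 16.0254\,n_2 + 17.3256\,n_3 + 17.7171\,n_{\ge 4} + 17.7171\,m.\]
   Context: A hypergraph $H=(V,E)$ consists of a finite vertex set $V$ and a finite collection $E$ of subsets of $V$ (edges); it is $k$-uniform if every edge has exactly $k$ vertices. The degree of a vertex $v$ is the number of edges containing $v$. For $i\ge 1$, $n_i$ denotes the number of vertices of degree exactly $i$, and $n_{\ge i}=\sum_{j\ge i} n_j$. A transversal is a vertex set meeting every edge; $\tau(H)$ is the minimum size of a transversal. *)

theory Defs
  imports Complex_Main "HOL-Library.Multiset"
begin

definition hypergraph :: "'a set \<Rightarrow> 'a set multiset \<Rightarrow> bool" where
  "hypergraph V E \<longleftrightarrow> finite V \<and> (\<forall>e\<in>#E. e \<subseteq> V)"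

definition uniform :: "nat \<Rightarrow> 'a set multiset \<Rightarrow> bool" where
  "uniform k E \<longleftrightarrow> (\<forall>e\<in>#E. card e = k)"

definition degree :: "'a set multiset \<Rightarrow> 'a \<Rightarrow> nat" where
  "degree E v = size (filter_mset (\<lambda>e. v \<in> e) E)"

definition n_deg :: "'a set \<Rightarrow> 'a set multiset \<Rightarrow> nat \<Rightarrow> nat" where
  "n_deg V E i = card {v \<in> V. degree E v = i}"

definition n_deg_ge :: "'a set \<Rightarrow> 'a set multiset \<Rightarrow> nat \<Rightarrow> nat" where
  "n_deg_ge V E i = card {v \<in> V. degree E v \<ge> i}"

definition is_transversal :: "'a set \<Rightarrow> 'a set multiset \<Rightarrow> 'a set \<Rightarrow> bool" where
  "is_transversal V E T \<longleftrightarrow> T \<subseteq> V \<and> (\<forall>e\<in>#E. T \<inter> e \<noteq> {})"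

definition tau :: "'a set \<Rightarrow> 'a set multiset \<Rightarrow> nat" where
  "tau V E = Min (card ` {T. is_transversal V E T})"

end

theory Submission
  imports Defs
begin

definition gw :: "nat \<Rightarrow> real" where
  "gw d = (if d = 0 then 0 else if d = 1 then 10.2854 else if d = 2 then 16.0254
           else if d = 3 then 17.3256 else 17.7171)"

definition cc :: real where "cc = 17.7171"

definition gam :: "nat \<Rightarrow> real" where "gam D = gw D - gw (D - 1)"

lemma gw_mono: "a \<le> b \<Longrightarrow> gw a \<le> gw b"
  by (auto simp: gw_def)

lemma gw_nonneg: "0 \<le> gw a" by (auto simp: gw_def)

lemma cases5: "(d::nat) \<le> 4 \<Longrightarrow> d = 0 \<or> d = 1 \<or> d = 2 \<or> d = 3 \<or> d = 4" by arith

lemma gv_bound: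
  assumes "1 \<le> D" "D \<le> 4" "d \<le> D" "t \<le> d"
  shows "gw d - gw (d - t) \<ge> real t * gam D"
proof -
  have "D = 1 \<or> D = 2 \<or> D = 3 \<or> D = 4" using assms by arith
  moreover have "d = 0 \<or> d = 1 \<or> d = 2 \<or> d = 3 \<or> d = 4" using assms by arith
  moreover have "t = 0 \<or> t = 1 \<or> t = 2 \<or> t = 3 \<or> t = 4" using assms by arith
  ultimately show ?thesis using assms by (elim disjE) (simp_all add: gw_def gam_def)
qed

lemma gv_bonus:
  assumes "3 \<le> D" "D \<le> 4" "d \<le> D" "1 \<le> t" "t \<le> d" "d < D \<or> 2 \<le> t"
  shows "gw d - gw (d - t) - real t * gam D \<ge> gam (D - 1) - gam D"
proof -
  have "D = 3 \<or> D = 4" using assms by arith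
  moreover have "d = 0 \<or> d = 1 \<or> d = 2 \<or> d = 3 \<or> d = 4" using assms by arith
  moreover have "t = 0 \<or> t = 1 \<or> t = 2 \<or> t = 3 \<or> t = 4" using assms by arith
  ultimately show ?thesis using assms by (elim disjE) (simp_all add: gw_def gam_def)
qed


abbreviation del :: "'a \<Rightarrow> 'a set multiset \<Rightarrow> 'a set multiset" where
  "del v E \<equiv> filter_mset (\<lambda>e. v \<notin> e) E"
abbreviation inc :: "'a \<Rightarrow> 'a set multiset \<Rightarrow> 'a set multiset" where
  "inc v E \<equiv> filter_mset (\<lambda>e. v \<in> e) E"

definition Phi :: "'a set \<Rightarrow> 'a set multiset \<Rightarrow> real" where
  "Phi V E = (\<Sum>u\<in>V. gw (degree E u)) + cc * real (size E)"

lemma degree_split: "degree E u = degree (inc v E) u + degree (del v E) u"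
proof -
  have "filter_mset (\<lambda>e. u \<in> e) E
        = filter_mset (\<lambda>e. u \<in> e) (inc v E) + filter_mset (\<lambda>e. u \<in> e) (del v E)"
    by (metis filter_union_mset multiset_partition)
  then show ?thesis unfolding degree_def by simp
qed

lemma degree_add: "degree (add_mset e E) u = degree E u + (if u \<in> e then 1 else 0)"
  by (simp add: degree_def)

lemma degree_empty[simp]: "degree {#} u = 0" by (simp add: degree_def)

lemma handshake:
  assumes "finite V" "\<forall>e\<in>#E. e \<subseteq> V" "\<forall>e\<in>#E. card e = 8"
  shows "(\<Sum>u\<in>V. degree E u) = 8 * size E"
  using assms(2,3)
proof (induction E)
  case empty
  then show ?case by simp
next
  case (add e E)
  have "(\<Sum>u\<in>V. degree (add_mset e E) u) = (\<Sum>u\<in>V. degree E u) + (\<Sum>u\<in>V. if u \<in> e then 1 else 0)"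
    by (simp add: degree_add sum.distrib)
  also have "(\<Sum>u\<in>V. if u \<in> (e::'a set) then 1 else (0::nat)) = card (V \<inter> e)"
    using assms(1) by (simp add: sum.If_cases)
  also have "V \<inter> e = e" using add.prems by auto
  finally show ?case using add by simp
qed

lemma degree_le_sub: "degree (filter_mset P E) u \<le> degree E u"
proof -
  have "filter_mset (\<lambda>e. u \<in> e) (filter_mset P E) = filter_mset P (filter_mset (\<lambda>e. u \<in> e) E)"
    by (simp add: filter_filter_mset conj_commute)
  then show ?thesis unfolding degree_def by (metis size_mset_mono multiset_filter_subset)
qed

lemma degree_inc_self: "degree (inc v E) v = degree E v"
  unfolding degree_def by (simp add: filter_filter_mset)

lemma degree_del_self: "degree (del v E) v = 0"
  unfolding degree_def by (simp add: filter_filter_mset)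

lemma hyp_sub: "hypergraph V E \<Longrightarrow> hypergraph V (filter_mset P E)"
  by (auto simp: hypergraph_def)
lemma unif_sub: "uniform k E \<Longrightarrow> uniform k (filter_mset P E)"
  by (auto simp: uniform_def)

lemma tsum:
  assumes "hypergraph V E" "uniform 8 E" "v \<in> V"
  shows "(\<Sum>u\<in>V-{v}. degree (inc v E) u) = 7 * degree E v"
proof -
  have "(\<Sum>u\<in>V. degree (inc v E) u) = 8 * size (inc v E)"
    using assms by (intro handshake) (auto simp: hypergraph_def uniform_def)
  moreover have "size (inc v E) = degree E v" by (simp add: degree_def)
  moreover have "(\<Sum>u\<in>V. degree (inc v E) u) = degree (inc v E) v + (\<Sum>u\<in>V-{v}. degree (inc v E) u)"
    using assms by (simp add: hypergraph_def sum.remove)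
  ultimately show ?thesis by (simp add: degree_inc_self)
qed


lemma del_deg: "degree (del v E) u = degree E u - degree (inc v E) u"
  using degree_split[of E u v] by simp

lemma size_split: "size E = degree E v + size (del v E)"
proof -
  have "size E = size (inc v E) + size (del v E)"
    by (metis multiset_partition size_union)
  then show ?thesis by (simp add: degree_def)
qed

lemma drop_eq:
  assumes "hypergraph V E" "uniform 8 E" "v \<in> V" "degree E v = D"
  shows "Phi V E - Phi V (del v E) = cc * real D + gw D + 7 * real D * gam D
     + (\<Sum>u\<in>V-{v}. gw (degree E u) - gw (degree (del v E) u) - real (degree (inc v E) u) * gam D)"
proof -
  have fin: "finite V" using assms(1) by (simp add: hypergraph_def)
  have t: "(\<Sum>u\<in>V-{v}. real (degree (inc v E) u)) = 7 * real D"
    using tsum[OF assms(1-3)] assms(4) by (metis of_nat_mult of_nat_numeral of_nat_sum)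
  have "Phi V E - Phi V (del v E) = (\<Sum>u\<in>V. gw (degree E u) - gw (degree (del v E) u))
        + cc * (real (size E) - real (size (del v E)))"
    unfolding Phi_def by (simp add: sum_subtractf algebra_simps)
  also have "real (size E) - real (size (del v E)) = real D"
    using size_split[of E v] assms(4) by simp
  also have "(\<Sum>u\<in>V. gw (degree E u) - gw (degree (del v E) u))
     = (gw (degree E v) - gw (degree (del v E) v)) + (\<Sum>u\<in>V-{v}. gw (degree E u) - gw (degree (del v E) u))"
    using fin assms(3) by (simp add: sum.remove)
  also have "gw (degree E v) - gw (degree (del v E) v) = gw D"
    using assms(4) by (simp add: degree_del_self gw_def)
  also have "(\<Sum>u\<in>V-{v}. gw (degree E u) - gw (degree (del v E) u))
     = (\<Sum>u\<in>V-{v}. gw (degree E u) - gw (degree (del v E) u) - real (degree (inc v E) u) * gam D)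
       + (\<Sum>u\<in>V-{v}. real (degree (inc v E) u)) * gam D"
    by (simp add: sum_subtractf sum_distrib_right)
  finally have eq: "Phi V E - Phi V (del v E) = gw D + ((\<Sum>u\<in>V-{v}. gw (degree E u) - gw (degree (del v E) u) - real (degree (inc v E) u) * gam D)
       + (\<Sum>u\<in>V-{v}. real (degree (inc v E) u)) * gam D) + cc * real D" .
  have "(\<Sum>u\<in>V-{v}. real (degree (inc v E) u)) * gam D = 7 * real D * gam D" using t by simp
  then show ?thesis using eq by linarith
qed

lemma term_nonneg:
  assumes "\<forall>u\<in>V. degree E u \<le> D" "1 \<le> D" "D \<le> 4" "u \<in> V"
  shows "0 \<le> gw (degree E u) - gw (degree (del v E) u) - real (degree (inc v E) u) * gam D"
proof -
  have a: "degree (inc v E) u \<le> degree E u" using degree_split[of E u v] by simp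
  have b: "degree (del v E) u = degree E u - degree (inc v E) u" by (rule del_deg)
  show ?thesis using gv_bound[OF assms(2,3) _ a] assms(1,4) unfolding b by auto
qed

lemma R_bounds:
  assumes "\<forall>u\<in>V. degree E u \<le> D" "1 \<le> D" "D \<le> 4" "finite V"
  shows "0 \<le> (\<Sum>u\<in>V-{v}. gw (degree E u) - gw (degree (del v E) u) - real (degree (inc v E) u) * gam D)"
    and "u0 \<in> V-{v} \<Longrightarrow> gw (degree E u0) - gw (degree (del v E) u0) - real (degree (inc v E) u0) * gam D
         \<le> (\<Sum>u\<in>V-{v}. gw (degree E u) - gw (degree (del v E) u) - real (degree (inc v E) u) * gam D)"
  using term_nonneg[OF assms(1-3)] assms(4)
  by (auto intro!: sum_nonneg member_le_sum)


lemma nonempty_size: "e \<in># M \<Longrightarrow> 1 \<le> size M"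
  by (metis One_nat_def Suc_le_eq gr0I size_eq_0_iff_empty empty_iff set_mset_empty)

lemma deg_pos: "e \<in># E \<Longrightarrow> u \<in> e \<Longrightarrow> w \<in> e \<Longrightarrow> 1 \<le> degree (inc u E) w"
  unfolding degree_def by (rule nonempty_size[of e]) simp

lemma is_tr_V: "hypergraph V E \<Longrightarrow> uniform 8 E \<Longrightarrow> is_transversal V E V"
proof -
  assume h: "hypergraph V E" and u: "uniform 8 E"
  have "\<forall>e\<in>#E. V \<inter> e \<noteq> {}"
  proof
    fix e assume e: "e \<in># E"
    then have "card e = 8" "e \<subseteq> V" using h u by (auto simp: hypergraph_def uniform_def)
    then have "e \<noteq> {}" by auto
    then show "V \<inter> e \<noteq> {}" using \<open>e \<subseteq> V\<close> by auto
  qed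
  then show ?thesis by (simp add: is_transversal_def)
qed

lemma tr_fin: "hypergraph V E \<Longrightarrow> finite (card ` {T. is_transversal V E T})"
proof -
  assume "hypergraph V E"
  then have "finite (Pow V)" by (simp add: hypergraph_def)
  moreover have "{T. is_transversal V E T} \<subseteq> Pow V" by (auto simp: is_transversal_def)
  ultimately show ?thesis by (meson finite_imageI finite_subset)
qed

lemma tau_le: "hypergraph V E \<Longrightarrow> is_transversal V E T \<Longrightarrow> tau V E \<le> card T"
  unfolding tau_def using tr_fin by (intro Min_le) auto

lemma tau_ex: "hypergraph V E \<Longrightarrow> uniform 8 E \<Longrightarrow> \<exists>T. is_transversal V E T \<and> card T = tau V E"
proof -
  assume h: "hypergraph V E" and u: "uniform 8 E"
  have "tau V E \<in> card ` {T. is_transversal V E T}"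
    unfolding tau_def using tr_fin[OF h] is_tr_V[OF h u] by (intro Min_in) auto
  then show ?thesis by auto
qed

lemma tau_del:
  assumes h: "hypergraph V E" and u: "uniform 8 E" and v: "v \<in> V"
  shows "tau V E \<le> tau V (del v E) + 1"
proof -
  obtain T where T: "is_transversal V (del v E) T" "card T = tau V (del v E)"
    using tau_ex[OF hyp_sub[OF h] unif_sub[OF u]] by blast
  have fT: "finite T" using T(1) h by (auto simp: is_transversal_def hypergraph_def intro: finite_subset)
  have "is_transversal V E (insert v T)"
    using T(1) v unfolding is_transversal_def by auto
  then have "tau V E \<le> card (insert v T)" by (rule tau_le[OF h])
  also have "\<dots> \<le> card T + 1" using fT by (simp add: card_insert_if)
  finally show ?thesis using T(2) by simp
qed

lemma step1:
  assumes IH: "\<And>E'. size E' < size E \<Longrightarrow> hypergraph V E' \<Longrightarrow> uniform 8 E' \<Longrightarrow> 100 * real (tau V E') \<le> Phi V E'"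
    and h: "hypergraph V E" and u: "uniform 8 E" and v: "v \<in> V" "1 \<le> degree E v"
    and d: "Phi V E - Phi V (del v E) \<ge> 100"
  shows "100 * real (tau V E) \<le> Phi V E"
proof -
  have "size (del v E) < size E" using size_split[of E v] v by simp
  then have "100 * real (tau V (del v E)) \<le> Phi V (del v E)"
    using IH hyp_sub[OF h] unif_sub[OF u] by blast
  moreover have "real (tau V E) \<le> real (tau V (del v E)) + 1" using tau_del[OF h u v(1)] by simp
  ultimately show ?thesis using d by linarith
qed

lemma step2:
  assumes IH: "\<And>E'. size E' < size E \<Longrightarrow> hypergraph V E' \<Longrightarrow> uniform 8 E' \<Longrightarrow> 100 * real (tau V E') \<le> Phi V E'"
    and h: "hypergraph V E" and u: "uniform 8 E" and v: "v \<in> V" "1 \<le> degree E v"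
    and w: "w \<in> V"
    and d: "Phi V E - Phi V (del w (del v E)) \<ge> 200"
  shows "100 * real (tau V E) \<le> Phi V E"
proof -
  have "size (del w (del v E)) \<le> size (del v E)" by (simp add: size_filter_mset_lesseq)
  then have "size (del w (del v E)) < size E" using size_split[of E v] v by linarith
  then have "100 * real (tau V (del w (del v E))) \<le> Phi V (del w (del v E))"
    using IH hyp_sub[OF hyp_sub[OF h]] unif_sub[OF unif_sub[OF u]] by blast
  moreover have "real (tau V E) \<le> real (tau V (del v E)) + 1" using tau_del[OF h u v(1)] by simp
  moreover have "real (tau V (del v E)) \<le> real (tau V (del w (del v E))) + 1"
  proof -
    have h1: "hypergraph V (del v E)" by (rule hyp_sub[OF h])
    have u1: "uniform 8 (del v E)" by (rule unif_sub[OF u])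
    show ?thesis using tau_del[OF h1 u1 w] by simp
  qed
  ultimately show ?thesis using d by linarith
qed

lemma nums34:
  assumes "D = 3 \<or> D = (4::nat)"
  shows "cc * real D + gw D + 7 * real D * gam D + (gam (D - 1) - gam D) \<ge> 100"
    and "2 * (cc * real D + gw D + 7 * real D * gam D) + (gam (D - 1) - gam D) \<ge> 200"
  using assms by (auto simp: cc_def gw_def gam_def)

lemma nums12:
  assumes "D = 1 \<or> D = (2::nat)"
  shows "cc * real D + gw D + 7 * real D * gam D \<ge> 100"
  using assms by (auto simp: cc_def gw_def gam_def)


lemma hard_case:
  assumes IH: "\<And>E'. size E' < size E \<Longrightarrow> hypergraph V E' \<Longrightarrow> uniform 8 E' \<Longrightarrow> 100 * real (tau V E') \<le> Phi V E'"
    and h: "hypergraph V E" and u: "uniform 8 E" and D: "D = 3 \<or> D = 4"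
    and mx: "\<forall>x\<in>V. degree E x \<le> D" and v: "v \<in> V" "degree E v = D"
  shows "100 * real (tau V E) \<le> Phi V E"
proof -
  have fin: "finite V" using h by (simp add: hypergraph_def)
  have D1: "1 \<le> D" "D \<le> 4" "3 \<le> D" using D by auto
  show ?thesis
  proof (cases "\<exists>x\<in>V. \<exists>y\<in>V. degree E x = D \<and> y \<noteq> x \<and> 1 \<le> degree (inc x E) y
                  \<and> (degree E y < D \<or> 2 \<le> degree (inc x E) y)")
    case True
    then obtain x y where xy: "x \<in> V" "y \<in> V" "degree E x = D" "y \<noteq> x" "1 \<le> degree (inc x E) y"
      "degree E y < D \<or> 2 \<le> degree (inc x E) y" by blast
    have a: "degree (inc x E) y \<le> degree E y" using degree_split[of E y x] by simp
    have b: "degree (del x E) y = degree E y - degree (inc x E) y" by (rule del_deg)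
    have bon: "gw (degree E y) - gw (degree (del x E) y) - real (degree (inc x E) y) * gam D \<ge> gam (D - 1) - gam D"
      unfolding b using gv_bonus[OF D1(3) D1(2) _ xy(5) a] mx xy(2,6) by auto
    have "Phi V E - Phi V (del x E) \<ge> cc * real D + gw D + 7 * real D * gam D + (gam (D - 1) - gam D)"
      using drop_eq[OF h u xy(1,3)] R_bounds(2)[OF mx D1(1,2) fin, of y x] xy bon by simp
    then have "Phi V E - Phi V (del x E) \<ge> 100" using nums34(1)[OF D] by linarith
    then show ?thesis using step1[OF IH h u xy(1)] xy(3) D1 by simp
  next
    case False
    define N where "N = {y \<in> V - {v}. 1 \<le> degree (inc v E) y}"
    have Nprop: "degree (inc v E) y = 1 \<and> degree E y = D" if "y \<in> N" for y
    proof -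
      have y: "y \<in> V" "y \<noteq> v" "1 \<le> degree (inc v E) y" using that by (auto simp: N_def)
      then have "\<not> (degree E y < D \<or> 2 \<le> degree (inc v E) y)" using False v by blast
      then show ?thesis using mx y by force
    qed
    have notN: "degree (inc v E) y = 0" if "y \<in> V - {v}" "y \<notin> N" for y
      using that by (auto simp: N_def)
    have "(\<Sum>y\<in>V-{v}. degree (inc v E) y) = (\<Sum>y\<in>V-{v}. if y \<in> N then 1 else 0)"
      using Nprop notN by (intro sum.cong) auto
    also have "\<dots> = card ((V-{v}) \<inter> N)" using fin by (simp add: sum.If_cases)
    also have "(V-{v}) \<inter> N = N" by (auto simp: N_def)
    finally have cardN: "card N = 7 * D" using tsum[OF h u v(1)] v(2) by simp
    have delN: "degree (del v E) y = D - 1" if "y \<in> N" for y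
      using Nprop[OF that] del_deg[of v E y] by simp
    show ?thesis
    proof (cases "\<exists>y\<in>N. \<exists>w\<in>V. w \<noteq> v \<and> w \<notin> N \<and> (\<exists>e\<in>#del v E. y \<in> e \<and> w \<in> e)")
      case True
      then obtain y w e where yw: "y \<in> N" "w \<in> V" "w \<noteq> v" "w \<notin> N" "e \<in># del v E" "y \<in> e" "w \<in> e"
        by blast
      define E1 where "E1 = del v E"
      have h1: "hypergraph V E1" unfolding E1_def by (rule hyp_sub[OF h])
      have u1: "uniform 8 E1" unfolding E1_def by (rule unif_sub[OF u])
      have yV: "y \<in> V" "degree E y = D" using yw(1) Nprop[OF yw(1)] unfolding N_def by simp_all
      have wy: "w \<noteq> y" using yw by auto
      have "1 \<le> degree (inc y E) w" using deg_pos[of e E y w] yw by simp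
      then have "degree E w = D" using False yV yw(2) wy mx by force
      moreover have "degree (inc v E) w = 0" using notN yw by auto
      ultimately have w1: "degree E1 w = D" unfolding E1_def using del_deg[of v E w] by simp
      have mx1: "\<forall>x\<in>V. degree E1 x \<le> D" using mx degree_le_sub unfolding E1_def by (meson order_trans)
      have y1: "degree E1 y = D - 1" unfolding E1_def using delN yw(1) by simp
      have t1: "1 \<le> degree (inc w E1) y" using deg_pos[of e E1 w y] yw unfolding E1_def by simp
      have a: "degree (inc w E1) y \<le> degree E1 y" using degree_split[of E1 y w] by simp
      have b: "degree (del w E1) y = degree E1 y - degree (inc w E1) y" by (rule del_deg)
      have bon: "gw (degree E1 y) - gw (degree (del w E1) y) - real (degree (inc w E1) y) * gam D \<ge> gam (D - 1) - gam D"
        unfolding b using gv_bonus[OF D1(3) D1(2) _ t1 a] mx1 yV(1) y1 D1 by auto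
      have dr2: "Phi V E1 - Phi V (del w E1) \<ge> cc * real D + gw D + 7 * real D * gam D + (gam (D - 1) - gam D)"
        using drop_eq[OF h1 u1 yw(2) w1] R_bounds(2)[OF mx1 D1(1,2) fin, of y w] yV wy bon by simp
      have dr1: "Phi V E - Phi V E1 \<ge> cc * real D + gw D + 7 * real D * gam D"
        using drop_eq[OF h u v] R_bounds(1)[OF mx D1(1,2) fin, of v] unfolding E1_def by simp
      have aux: "\<And>a b B \<beta>::real. a \<ge> B \<Longrightarrow> b \<ge> B + \<beta> \<Longrightarrow> 200 \<le> 2 * B + \<beta> \<Longrightarrow> a + b \<ge> 200"
        by linarith
      have "Phi V E - Phi V (del w E1) = (Phi V E - Phi V E1) + (Phi V E1 - Phi V (del w E1))" by simp
      also have "\<dots> \<ge> 200" by (rule aux[OF dr1 dr2 nums34(2)[OF D]])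
      finally have "Phi V E - Phi V (del w E1) \<ge> 200" .
      then show ?thesis using step2[OF IH h u v(1) _ yw(2)] v(2) D1 unfolding E1_def by simp
    next
      case False2: False
      define E2 where "E2 = filter_mset (\<lambda>e. e \<inter> N \<noteq> {}) (del v E)"
      have sub: "\<forall>e\<in>#E2. e \<subseteq> N"
      proof
        fix e assume e: "e \<in># E2"
        show "e \<subseteq> N"
        proof
          fix z assume z: "z \<in> e"
          obtain y where y: "y \<in> e" "y \<in> N" using e by (auto simp: E2_def)
          have "e \<subseteq> V" "v \<notin> e" using e h by (auto simp: E2_def hypergraph_def)
          then have zV: "z \<in> V" "z \<noteq> v" using z by auto
          have eE: "e \<in># del v E" using e by (simp add: E2_def)
          show "z \<in> N"
          proof (rule ccontr)
            assume "z \<notin> N"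
            then show False using False2 y(2) zV eE y(1) z by blast
          qed
        qed
      qed
      have c8: "\<forall>e\<in>#E2. card e = 8" using u by (auto simp: E2_def uniform_def)
      have finN: "finite N" using fin by (simp add: N_def)
      have degE2: "degree E2 y = D - 1" if "y \<in> N" for y
      proof -
        have "filter_mset (\<lambda>e. y \<in> e) E2 = filter_mset (\<lambda>e. y \<in> e) (del v E)"
          unfolding E2_def filter_filter_mset using that by (intro filter_mset_cong) auto
        then show ?thesis using delN[OF that] by (simp add: degree_def)
      qed
      have "(\<Sum>y\<in>N. degree E2 y) = 8 * size E2" by (rule handshake[OF finN sub c8])
      moreover have "(\<Sum>y\<in>N. degree E2 y) = 7 * D * (D - 1)" using degE2 cardN by simp
      ultimately have "8 * size E2 = 7 * D * (D - 1)" by simp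
      then have False using D by (elim disjE; simp; presburger)
      then show ?thesis ..
    qed
  qed
qed


lemma main: "hypergraph V E \<Longrightarrow> uniform 8 E \<Longrightarrow> 100 * real (tau V E) \<le> Phi V E"
proof (induction "size E" arbitrary: E rule: less_induct)
  case less
  have IH: "\<And>E'. size E' < size E \<Longrightarrow> hypergraph V E' \<Longrightarrow> uniform 8 E' \<Longrightarrow> 100 * real (tau V E') \<le> Phi V E'"
    using less.hyps by blast
  have h: "hypergraph V E" and u: "uniform 8 E" by fact+
  have fin: "finite V" using h by (simp add: hypergraph_def)
  have Pnn: "0 \<le> Phi V E'" for E' unfolding Phi_def cc_def by (intro add_nonneg_nonneg sum_nonneg) (auto simp: gw_nonneg)
  show ?case
  proof (cases "E = {#}")
    case True
    have "is_transversal V E {}" using True by (simp add: is_transversal_def)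
    then have "tau V E = 0" using tau_le[OF h] by fastforce
    then show ?thesis using Pnn by simp
  next
    case False
    then obtain e where e: "e \<in># E" by (meson multiset_nonemptyE)
    then have "card e = 8" "e \<subseteq> V" using h u by (auto simp: hypergraph_def uniform_def)
    then obtain x where x: "x \<in> e" "x \<in> V" by (metis card.empty ex_in_conv subsetD zero_neq_numeral)
    have x1: "1 \<le> degree E x" unfolding degree_def by (rule nonempty_size[of e]) (simp add: e x)
    define D where "D = Max (degree E ` V)"
    have mx: "\<forall>y\<in>V. degree E y \<le> D" unfolding D_def using fin by auto
    have "D \<in> degree E ` V" unfolding D_def using fin x by (intro Max_in) auto
    then obtain v where v: "v \<in> V" "degree E v = D" by auto
    have D1: "1 \<le> D" using mx x x1 by force
    show ?thesis
    proof (cases "5 \<le> D")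
      case True
      have g0: "gam D = 0" using True by (simp add: gam_def gw_def) arith
      have "0 \<le> (\<Sum>u\<in>V-{v}. gw (degree E u) - gw (degree (del v E) u) - real (degree (inc v E) u) * gam D)"
        unfolding g0 by (intro sum_nonneg) (simp add: gw_mono degree_le_sub)
      then have "Phi V E - Phi V (del v E) \<ge> cc * real D + gw D"
        using drop_eq[OF h u v] g0 by simp
      moreover have "cc * real D + gw D \<ge> 100"
      proof -
        have "real D \<ge> 5" using True by simp
        then have "cc * real D \<ge> cc * 5" by (simp add: cc_def)
        moreover have "gw D = 17.7171" using True by (simp add: gw_def)
        ultimately show ?thesis by (simp add: cc_def)
      qed
      ultimately show ?thesis using step1[OF IH h u v(1)] v(2) D1 by simp
    next
      case False
      show ?thesis
      proof (cases "D \<le> 2")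
        case True
        then have "D = 1 \<or> D = 2" using D1 by auto
        then have "Phi V E - Phi V (del v E) \<ge> 100"
          using drop_eq[OF h u v] R_bounds(1)[OF mx D1 _ fin, of v] nums12 True by fastforce
        then show ?thesis using step1[OF IH h u v(1)] v(2) D1 by simp
      next
        case False2: False
        then have "D = 3 \<or> D = 4" using False by auto
        then show ?thesis using hard_case[OF IH h u _ mx v] by blast
      qed
    qed
  qed
qed


lemma card_ind: "finite V \<Longrightarrow> (\<Sum>u\<in>V. if P u then (1::real) else 0) = real (card {u\<in>V. P u})"
proof -
  assume f: "finite V"
  have "(\<Sum>u\<in>V. if P u then (1::real) else 0) = real (card (V \<inter> {u. P u}))"
    using f by (simp add: sum.If_cases)
  also have "V \<inter> {u. P u} = {u\<in>V. P u}" by auto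
  finally show ?thesis .
qed

theorem mainTheorem4:
  fixes V :: "'a set" and E :: "'a set multiset"
  assumes "hypergraph V E" and "uniform 8 E"
  shows "100 * real (tau V E) \<le>
      10.2854 * real (n_deg V E 1) + 16.0254 * real (n_deg V E 2)
    + 17.3256 * real (n_deg V E 3) + 17.7171 * real (n_deg_ge V E 4)
    + 17.7171 * real (size E)"
proof -
  have fin: "finite V" using assms(1) by (simp add: hypergraph_def)
  have g: "gw d = 10.2854 * (if d = 1 then 1 else 0) + 16.0254 * (if d = 2 then 1 else 0)
     + 17.3256 * (if d = 3 then 1 else 0) + 17.7171 * (if d \<ge> 4 then 1 else 0)" for d
    by (simp add: gw_def)
  have "(\<Sum>u\<in>V. gw (degree E u)) =
      10.2854 * (\<Sum>u\<in>V. if degree E u = 1 then 1 else 0) + 16.0254 * (\<Sum>u\<in>V. if degree E u = 2 then 1 else 0)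
    + 17.3256 * (\<Sum>u\<in>V. if degree E u = 3 then 1 else 0) + 17.7171 * (\<Sum>u\<in>V. if degree E u \<ge> 4 then 1 else 0)"
    unfolding g by (simp add: sum.distrib sum_distrib_left)
  also have "\<dots> = 10.2854 * real (n_deg V E 1) + 16.0254 * real (n_deg V E 2)
    + 17.3256 * real (n_deg V E 3) + 17.7171 * real (n_deg_ge V E 4)"
    unfolding n_deg_def n_deg_ge_def card_ind[OF fin] by simp
  finally have "Phi V E = 10.2854 * real (n_deg V E 1) + 16.0254 * real (n_deg V E 2)
    + 17.3256 * real (n_deg V E 3) + 17.7171 * real (n_deg_ge V E 4)
    + 17.7171 * real (size E)" unfolding Phi_def cc_def by simp
  then show ?thesis using main[OF assms] by simp
qed

end
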